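(* Let $M=M_{\bar0}\oplus M_{\bar1}$ be an $\mathcal{R}$-module which is free of rank $1$ as a $U(\eta)$-module, $\eta=\mathbb{C}L_{0,0}\oplus\mathbb{C}G_{0,0}$, with a homogeneous free generator $1\in M_{\bar0}$, so $M=\mathbb{C}[L_{0,0}]1\oplus G_{0,0}\mathbb{C}[L_{0,0}]1$. Write $f(t^2)1:=f(L_{0,0})1$ and $t1:=G_{0,0}1$. Suppose $\lambda\in\mathbb{C}^*$ and $a,b\in\mathbb{C}$ are such that for all $m\in\mathbb{Z}$, $i\in\mathbb{Z}_+$ and $f\in\mathbb{C}[t^2]$, $L_{m,i}f(t^2)1=\lambda^m(\delta_{i,0}(t^2-mqa)+\delta_{q,-1}\delta_{i,1}b)f(t^2-mq)1$. Then $G_{m,i}1=\lambda^m\delta_{i,0}\,t1$ (i.e. $G_{m,i}1=\lambda^m\delta_{i,0}G_{0,0}1$) for all $m\in\mathbb{Z}$ and $i\in\mathbb{Z}_+$.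
   Context: Fix $q\in\mathbb{C}^*$; $\mathbb{Z}_+=\{0,1,2,\dots\}$; $\delta$ is the Kronecker delta. The Ramond-Block algebra $\mathcal{R}$ is the Lie superalgebra over $\mathbb{C}$ with even basis $\{L_{m,i}\mid m\in\mathbb{Z},i\in\mathbb{Z}_+\}$, odd basis $\{G_{l,j}\mid l\in\mathbb{Z},j\in\mathbb{Z}_+\}$ and brackets $[L_{m,i},L_{n,j}]=(n(i+q)-m(j+q))L_{m+n,i+j}$, $[L_{m,i},G_{l,j}]=(l(i+q)-m(j+\frac{q}{2}))G_{m+l,i+j}$, $[G_{l,i},G_{r,j}]=2qL_{l+r,i+j}$. Modules are supermodules. *)

theory Defs
  imports Complex_Main "HOL-Computational_Algebra.Polynomial"
begin

text \<open>A module over the Ramond-Block algebra R (parameter q), on an abstract complex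
vector space with scalar multiplication smul.  The even basis element L_{m,i} acts by
the linear map L m i, the odd basis element G_{l,j} by G l j.\<close>

definition ramond_block_module ::
  "complex \<Rightarrow> (complex \<Rightarrow> 'v::ab_group_add \<Rightarrow> 'v) \<Rightarrow> 'v set \<Rightarrow> 'v set
   \<Rightarrow> (int \<Rightarrow> nat \<Rightarrow> 'v \<Rightarrow> 'v) \<Rightarrow> (int \<Rightarrow> nat \<Rightarrow> 'v \<Rightarrow> 'v) \<Rightarrow> bool" where
  "ramond_block_module q smul M0 M1 L G \<longleftrightarrow>
     vector_space smul \<and>
     module.subspace smul M0 \<and> module.subspace smul M1 \<and>
     (\<forall>v. \<exists>!p. fst p \<in> M0 \<and> snd p \<in> M1 \<and> v = fst p + snd p) \<and>
     (\<forall>m i. Vector_Spaces.linear smul smul (L m i)) \<and>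
     (\<forall>m i. Vector_Spaces.linear smul smul (G m i)) \<and>
     (\<forall>m i. L m i ` M0 \<subseteq> M0 \<and> L m i ` M1 \<subseteq> M1) \<and>
     (\<forall>m i. G m i ` M0 \<subseteq> M1 \<and> G m i ` M1 \<subseteq> M0) \<and>
     (\<forall>m i n j v. L m i (L n j v) - L n j (L m i v) =
        smul (of_int n * (of_nat i + q) - of_int m * (of_nat j + q)) (L (m + n) (i + j) v)) \<and>
     (\<forall>m i l j v. L m i (G l j v) - G l j (L m i v) =
        smul (of_int l * (of_nat i + q) - of_int m * (of_nat j + q / 2)) (G (m + l) (i + j) v)) \<and>
     (\<forall>l i r j v. G l i (G r j v) + G r j (G l i v) =
        smul (2 * q) (L (l + r) (i + j) v))"

definition poly_op ::
  "(complex \<Rightarrow> 'v::ab_group_add \<Rightarrow> 'v) \<Rightarrow> complex poly \<Rightarrow> ('v \<Rightarrow> 'v) \<Rightarrow> 'v \<Rightarrow> 'v" where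
  "poly_op smul p A v = (\<Sum>k\<le>degree p. smul (coeff p k) ((A ^^ k) v))"

text \<open>M is free of rank one over U(eta), eta = C L_{0,0} + C G_{0,0}, with free
generator w: by PBW, U(eta) has basis L_{0,0}^k G_{0,0}^e (k \<ge> 0, e \<in> {0,1}), so
freeness on w means (p0,p1) \<mapsto> p0(L_{0,0}) w + p1(L_{0,0}) G_{0,0} w is bijective
from C[x] \<times> C[x] onto M.\<close>

definition free_rank_one_over_eta ::
  "(complex \<Rightarrow> 'v::ab_group_add \<Rightarrow> 'v) \<Rightarrow> (int \<Rightarrow> nat \<Rightarrow> 'v \<Rightarrow> 'v) \<Rightarrow> (int \<Rightarrow> nat \<Rightarrow> 'v \<Rightarrow> 'v)
   \<Rightarrow> 'v \<Rightarrow> bool" where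
  "free_rank_one_over_eta smul L G w \<longleftrightarrow>
     bij (\<lambda>(p0, p1). poly_op smul p0 (L 0 0) w + poly_op smul p1 (L 0 0) (G 0 0 w))"

end

theory Submission
  imports Defs
begin

locale cvs = vector_space scale for scale :: "complex \<Rightarrow> 'v::ab_group_add \<Rightarrow> 'v"
begin

lemma poly_op_upto:
  assumes "degree p \<le> N"
  shows "poly_op scale p A v = (\<Sum>k\<le>N. scale (coeff p k) ((A ^^ k) v))"
  unfolding poly_op_def
proof (rule sum.mono_neutral_left)
  show "\<forall>i\<in>{..N} - {..degree p}. scale (coeff p i) ((A ^^ i) v) = 0"
    by (auto simp: coeff_eq_0)
qed (use assms in auto)

lemma poly_op_pCons:
  assumes add: "\<And>x y. A (x + y) = A x + A y" and sc: "\<And>c x. A (scale c x) = scale c (A x)"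
  shows "poly_op scale (pCons a p) A v = scale a v + A (poly_op scale p A v)"
proof -
  have A0: "A 0 = 0" using sc[of 0 0] by simp
  have Asum: "A (\<Sum>k\<in>S. f k) = (\<Sum>k\<in>S. A (f k))" for f :: "nat \<Rightarrow> 'v" and S
    by (induct S rule: infinite_finite_induct) (simp_all add: A0 add)
  have "poly_op scale (pCons a p) A v = (\<Sum>k\<le>Suc (degree p). scale (coeff (pCons a p) k) ((A ^^ k) v))"
    by (rule poly_op_upto) (simp add: degree_pCons_le)
  also have "\<dots> = scale a v + (\<Sum>k\<le>degree p. scale (coeff p k) (A ((A ^^ k) v)))"
    by (subst sum.atMost_Suc_shift) simp
  also have "\<dots> = scale a v + A (poly_op scale p A v)"
    unfolding poly_op_def Asum sc ..
  finally show ?thesis .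
qed


lemma poly_op_0 [simp]: "poly_op scale 0 A v = 0"
  by (simp add: poly_op_def)

lemma poly_op_const [simp]: "poly_op scale [:c:] A v = scale c v"
  by (simp add: poly_op_def)

lemma poly_op_add: "poly_op scale (p + q) A v = poly_op scale p A v + poly_op scale q A v"
proof -
  define N where "N = max (degree p) (degree q)"
  have "poly_op scale (p + q) A v = (\<Sum>k\<le>N. scale (coeff (p + q) k) ((A ^^ k) v))"
    by (rule poly_op_upto) (simp add: N_def degree_add_le)
  also have "\<dots> = (\<Sum>k\<le>N. scale (coeff p k) ((A ^^ k) v)) + (\<Sum>k\<le>N. scale (coeff q k) ((A ^^ k) v))"
    by (simp add: scale_left_distrib sum.distrib)
  also have "\<dots> = poly_op scale p A v + poly_op scale q A v"
    by (simp add: poly_op_upto[symmetric] N_def)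
  finally show ?thesis .
qed

lemma poly_op_smult: "poly_op scale (smult c p) A v = scale c (poly_op scale p A v)"
proof -
  have "poly_op scale (smult c p) A v = (\<Sum>k\<le>degree p. scale (coeff (smult c p) k) ((A ^^ k) v))"
    by (rule poly_op_upto) simp
  also have "\<dots> = scale c (poly_op scale p A v)"
    by (simp add: poly_op_def scale_sum_right)
  finally show ?thesis .
qed

lemma poly_op_diff: "poly_op scale (p - q) A v = poly_op scale p A v - poly_op scale q A v"
  using poly_op_add[of "p - q" q A v] by (simp add: algebra_simps)

lemma poly_op_mult:
  assumes add: "\<And>x y. A (x + y) = A x + A y" and sc: "\<And>c x. A (scale c x) = scale c (A x)"
  shows "poly_op scale (p * q) A v = poly_op scale p A (poly_op scale q A v)"
proof (induction p rule: pCons_induct)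
  case (pCons a p)
  show ?case
    by (simp add: poly_op_add poly_op_smult poly_op_pCons[OF add sc] pCons.IH)
qed simp

lemma poly_op_in:
  assumes "subspace S" "\<And>x. x \<in> S \<Longrightarrow> A x \<in> S" "v \<in> S"
    and add: "\<And>x y. A (x + y) = A x + A y" and sc: "\<And>c x. A (scale c x) = scale c (A x)"
  shows "poly_op scale p A v \<in> S"
proof (induction p rule: pCons_induct)
  case 0
  then show ?case using assms(1) by (simp add: subspace_0)
next
  case (pCons a p)
  then show ?case using assms by (simp add: poly_op_pCons[OF add sc] subspace_add subspace_scale)
qed

lemma poly_op_comm:
  assumes add: "\<And>x y. A (x + y) = A x + A y" and sc: "\<And>c x. A (scale c x) = scale c (A x)"
    and Badd: "\<And>x y. B (x + y) = B x + B y" and Bsc: "\<And>c x. B (scale c x) = scale c (B x)"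
    and BA: "\<And>u. B (A u) = A (B u) - scale c (B u)"
  shows "B (poly_op scale p A v) = poly_op scale (pcompose p [:-c, 1:]) A (B v)"
proof (induction p rule: pCons_induct)
  case 0
  have "B 0 = 0" using Bsc[of 0 0] by simp
  then show ?case by simp
next
  case (pCons a p)
  have A0: "A 0 = 0" using sc[of 0 0] by simp
  show ?case
    by (simp add: poly_op_pCons[OF add sc] pcompose_pCons poly_op_add poly_op_mult[OF add sc]
        Badd Bsc BA pCons.IH A0 poly_op_diff poly_op_smult algebra_simps)
qed

end

lemma polyA:
  fixes g :: "complex poly"
  assumes q: "q \<noteq> 0" and e: "pcompose g [:-s,1:] * (smult (2*q) [:c:] - g * [:0,q:]) = 0"
  shows "g = 0"
proof (rule ccontr)
  assume g: "g \<noteq> 0"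
  have "pcompose g [:-s,1:] \<noteq> 0" using g pcompose_eq_0[of g "[:-s,1:]"] by auto
  then have "smult (2*q) [:c:] - g * [:0,q:] = 0" using e mult_eq_0_iff by blast
  then have "smult (2*q) [:c:] = g * [:0,q:]" by (simp only: right_minus_eq)
  moreover have "degree (g * [:0,q:]) = degree g + 1" using g q by (subst degree_mult_eq) auto
  ultimately show False by (metis add_is_0 degree_pCons_0 degree_smult_le le_zero_eq one_neq_zero)
qed

lemma polyB:
  fixes g :: "complex poly"
  assumes q: "q \<noteq> 0"
    and e: "pcompose g [:-s,1:] * (smult (2*q) (smult l [:-t,1:]) - g * [:0,q:]) = smult q (smult (l^2) [:-t2,1:])"
  shows "g = [:l:]"
proof -
  define r where "r = smult (2*q) (smult l [:-t,1:])"
  have dr: "degree r \<le> 1" unfolding r_def by simp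
  have "degree g = 0"
  proof (rule ccontr)
    assume d: "degree g \<noteq> 0"
    then have g: "g \<noteq> 0" by auto
    have g': "pcompose g [:-s,1:] \<noteq> 0" using g pcompose_eq_0[of g "[:-s,1:]"] by auto
    have dg': "degree (pcompose g [:-s,1:]) = degree g" by (simp add: degree_pcompose)
    have dgq: "degree (g * [:0,q:]) = degree g + 1" using g q by (subst degree_mult_eq) auto
    have dh: "degree (r - g * [:0,q:]) = degree g + 1"
    proof -
      have "degree (r + - (g * [:0,q:])) = degree (- (g * [:0,q:]))"
        by (rule degree_add_eq_right) (use dr dgq d in \<open>simp only: degree_minus\<close>; linarith)
      then show ?thesis using dgq by (simp only: diff_conv_add_uminus degree_minus)
    qed
    then have h: "r - g * [:0,q:] \<noteq> 0" by auto
    have "degree (pcompose g [:-s,1:] * (r - g * [:0,q:])) = 2 * degree g + 1"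
      using g' h dg' dh by (subst degree_mult_eq) auto
    moreover have "degree (smult q (smult (l^2) [:-t2,1:])) \<le> 1" by simp
    ultimately show False using e d unfolding r_def by simp
  qed
  then obtain c where gc: "g = [:c:]" by (metis degree_eq_zeroE)
  have "coeff (pcompose g [:-s,1:] * (smult (2*q) (smult l [:-t,1:]) - g * [:0,q:])) 1
        = coeff (smult q (smult (l^2) [:-t2,1:])) 1" using e by simp
  then have "c * (2*q*l - c*q) = q * l^2" by (simp add: gc algebra_simps)
  then have "q * (c - l)^2 = 0" by (simp add: power2_eq_square algebra_simps)
  then have "c = l" using q by simp
  then show ?thesis using gc by simp
qed

theorem lemma3p4:
  fixes q lam a b :: complex
    and smul :: "complex \<Rightarrow> 'v::ab_group_add \<Rightarrow> 'v"
    and M0 M1 :: "'v set"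
    and L G :: "int \<Rightarrow> nat \<Rightarrow> 'v \<Rightarrow> 'v"
    and w :: 'v
  assumes "q \<noteq> 0"
    and "ramond_block_module q smul M0 M1 L G"
    and "free_rank_one_over_eta smul L G w"
    and "w \<in> M0"
    and "lam \<noteq> 0"
    and "\<And>m i f. L m i (poly_op smul f (L 0 0) w) =
           poly_op smul
             (smult (lam powi m)
                ((if i = 0 then [:- (of_int m * q * a), 1:] else 0)
                 + (if q = -1 \<and> i = 1 then [:b:] else 0))
              * pcompose f [:- (of_int m * q), 1:])
             (L 0 0) w"
  shows "\<forall>m i. G m i w = smul (if i = 0 then lam powi m else 0) (G 0 0 w)"
proof -
  note qnz = assms(1) and wM0 = assms(4) and Lact = assms(6)
  from assms(2) have vs: "vector_space smul"
    and sM0: "module.subspace smul M0" and sM1: "module.subspace smul M1"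
    and uniq: "\<forall>v. \<exists>!p. fst p \<in> M0 \<and> snd p \<in> M1 \<and> v = fst p + snd p"
    and linL: "\<forall>m i. Vector_Spaces.linear smul smul (L m i)"
    and linG: "\<forall>m i. Vector_Spaces.linear smul smul (G m i)"
    and parL: "\<forall>m i. L m i ` M0 \<subseteq> M0 \<and> L m i ` M1 \<subseteq> M1"
    and parG: "\<forall>m i. G m i ` M0 \<subseteq> M1 \<and> G m i ` M1 \<subseteq> M0"
    and LG: "\<forall>m i l j v. L m i (G l j v) - G l j (L m i v) =
        smul (of_int l * (of_nat i + q) - of_int m * (of_nat j + q / 2)) (G (m + l) (i + j) v)"
    and GG: "\<forall>l i r j v. G l i (G r j v) + G r j (G l i v) =
        smul (2 * q) (L (l + r) (i + j) v)"
    unfolding ramond_block_module_def by auto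
  interpret V: cvs smul using vs by (simp add: cvs_def)
  have Ladd: "\<And>m i x y. L m i (x + y) = L m i x + L m i y"
    and Lsc: "\<And>m i c x. L m i (smul c x) = smul c (L m i x)"
    using linL unfolding Vector_Spaces.linear_iff by blast+
  have Gadd: "\<And>m i x y. G m i (x + y) = G m i x + G m i y"
    and Gsc: "\<And>m i c x. G m i (smul c x) = smul c (G m i x)"
    using linG unfolding Vector_Spaces.linear_iff by blast+
  define X where "X = L 0 0"
  define PO where "PO p v = poly_op smul p X v" for p v
  define u where "u = G 0 0 w"
  have Xadd: "\<And>x y. X (x + y) = X x + X y" and Xsc: "\<And>c x. X (smul c x) = smul c (X x)"
    unfolding X_def by (rule Ladd, rule Lsc)
  have X0: "X 0 = 0" using Xsc[of 0 0] by simp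
  have half: "x = y" if "x + x = smul (2*q) z" "y = smul q z" for x y z
  proof -
    have "smul 2 x = smul 2 y" using that
      by (metis V.scale_left_distrib V.scale_one V.scale_scale one_add_one)
    then show ?thesis by simp
  qed
  have G00u: "G 0 0 u = PO [:0,q:] w"
  proof -
    have "G 0 0 u + G 0 0 u = smul (2*q) (X w)" using GG[rule_format, of 0 0 0 0 w]
      by (simp add: u_def X_def)
    moreover have "PO [:0,q:] w = smul q (X w)"
      unfolding PO_def by (simp add: V.poly_op_pCons[OF Xadd Xsc] Xsc X0)
    ultimately show ?thesis using half by metis
  qed
  have GX: "G m i (X v) = X (G m i v) - smul (of_int m * q) (G m i v)" for m i v
    using LG[rule_format, of 0 0 m i v] by (simp add: X_def algebra_simps)
  have Gcomm: "G m i (PO p v) = PO (pcompose p [:-(of_int m * q), 1:]) (G m i v)" for m i p v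
    unfolding PO_def by (rule V.poly_op_comm[OF Xadd Xsc Gadd Gsc GX])
  have G00comm: "G 0 0 (PO p v) = PO p (G 0 0 v)" for p v
    using Gcomm[of 0 0 p v] by simp
  have POmult: "PO (p * r) v = PO p (PO r v)" for p r v
    unfolding PO_def by (rule V.poly_op_mult[OF Xadd Xsc])
  have bijF: "bij (\<lambda>(p0, p1). PO p0 w + PO p1 u)"
    using assms(3) unfolding free_rank_one_over_eta_def PO_def X_def u_def .
  have inj1: "p = r" if "PO p w = PO r w" for p r
  proof -
    have "(\<lambda>(p0, p1). PO p0 w + PO p1 u) (p, 0) = (\<lambda>(p0, p1). PO p0 w + PO p1 u) (r, 0)"
      using that by (simp add: PO_def)
    from injD[OF bij_is_inj[OF bijF] this] show ?thesis by simp
  qed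
  have XM0: "X x \<in> M0" if "x \<in> M0" for x using parL that unfolding X_def by blast
  have XM1: "X x \<in> M1" if "x \<in> M1" for x using parL that unfolding X_def by blast
  have uM1: "u \<in> M1" using parG wM0 unfolding u_def by blast
  have POM0: "PO p w \<in> M0" for p
    unfolding PO_def by (rule V.poly_op_in[OF sM0 XM0 wM0 Xadd Xsc])
  have POM1: "PO p u \<in> M1" for p
    unfolding PO_def by (rule V.poly_op_in[OF sM1 XM1 uM1 Xadd Xsc])
  have Gform: "\<exists>g. G m i w = PO g u" for m i
  proof -
    have GM1: "G m i w \<in> M1" using parG wM0 by blast
    obtain pr where pr: "G m i w = (\<lambda>(p0, p1). PO p0 w + PO p1 u) pr"
      using surjD[OF bij_is_surj[OF bijF]] by blast
    obtain p0 p1 where pp: "G m i w = PO p0 w + PO p1 u"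
      using pr by (cases pr) simp
    have z: "0 \<in> M0" using sM0 by (simp add: V.subspace_0)
    have U: "x = y" if "fst x \<in> M0 \<and> snd x \<in> M1 \<and> G m i w = fst x + snd x"
        "fst y \<in> M0 \<and> snd y \<in> M1 \<and> G m i w = fst y + snd y" for x y :: "'v \<times> 'v"
      using uniq[rule_format, of "G m i w"] that by blast
    have "(PO p0 w, PO p1 u) = (0, G m i w)"
      by (rule U) (simp_all add: pp[symmetric] POM0 POM1 z GM1)
    then have "PO p0 w = PO 0 w" by (simp add: PO_def)
    then have "p0 = 0" by (rule inj1)
    then show ?thesis using pp by (auto simp: PO_def)
  qed
  define P where "P m i = smult (lam powi m)
                ((if i = 0 then [:- (of_int m * q * a), 1:] else 0)
                 + (if q = -1 \<and> i = 1 then [:b:] else 0))" for m :: int and i :: nat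
  have Lw: "L m i w = PO (P m i) w" for m i
  proof -
    have "PO 1 w = w" by (simp add: PO_def one_pCons)
    then show ?thesis using Lact[of m i 1] by (simp add: PO_def X_def P_def pcompose_1)
  qed
  have key: "G m i w = smul (if i = 0 then lam powi m else 0) u" for m i
  proof -
    obtain g where g: "G m i w = PO g u" using Gform by blast
    have e1: "G 0 0 (G m i w) = PO (g * [:0,q:]) w"
      using g G00comm G00u POmult[of g "[:0,q:]" w] by (simp del: mult_pCons_right)
    have "G m i u + G 0 0 (G m i w) = smul (2*q) (L m i w)"
      using GG[rule_format, of m i 0 0 w] by (simp add: u_def)
    then have e2: "G m i u = PO (smult (2*q) (P m i) - g * [:0,q:]) w"
      using e1 Lw by (simp add: PO_def V.poly_op_diff V.poly_op_smult eq_diff_eq)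
    have e3: "G m i (G m i w) = PO (pcompose g [:-(of_int m * q), 1:] * (smult (2*q) (P m i) - g * [:0,q:])) w"
      unfolding g Gcomm e2 POmult ..
    have "G m i (G m i w) + G m i (G m i w) = smul (2*q) (L (m+m) (i+i) w)"
      using GG[rule_format, of m i m i w] by simp
    then have "G m i (G m i w) = PO (smult q (P (m+m) (i+i))) w"
    proof (rule half)
      show "PO (smult q (P (m+m) (i+i))) w = smul q (L (m+m) (i+i) w)"
        by (simp add: Lw PO_def V.poly_op_smult)
    qed
    with e3 have eq: "pcompose g [:-(of_int m * q), 1:] * (smult (2*q) (P m i) - g * [:0,q:])
        = smult q (P (m+m) (i+i))" by (intro inj1) (rule trans[OF sym], assumption+)
    show ?thesis
    proof (cases "i = 0")
      case True
      have "lam powi (m+m) = (lam powi m)^2"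
        using assms(5) power_int_add[of lam m m] by (simp add: power2_eq_square)
      then have hP2: "P (m+m) (i+i) = smult ((lam powi m)^2) [:-(of_int (m+m) * q * a), 1:]"
        and hP1: "P m i = smult (lam powi m) [:-(of_int m * q * a), 1:]"
        using True by (simp_all add: P_def)
      have "g = [:lam powi m:]"
      proof (rule polyB[OF qnz])
        show "pcompose g [:-(of_int m*q),1:] * (smult (2*q) (smult (lam powi m) [:-(of_int m*q*a),1:]) - g*[:0,q:])
           = smult q (smult ((lam powi m)^2) [:-(of_int (m+m)*q*a),1:])"
          using eq by (simp only: hP1 hP2)
      qed
      then show ?thesis using g True by (simp only: PO_def V.poly_op_const if_True simp_thms)
    next
      case False
      have hP2: "P (m+m) (i+i) = 0" using False by (simp add: P_def)
      have hP1: "P m i = [:lam powi m * (if q = -1 \<and> i = 1 then b else 0):]"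
        using False by (simp add: P_def)
      have "g = 0"
      proof (rule polyA[OF qnz])
        show "pcompose g [:-(of_int m*q),1:] * (smult (2*q) [:lam powi m * (if q = -1 \<and> i = 1 then b else 0):] - g*[:0,q:]) = 0"
          using eq by (simp only: hP1 hP2 smult_0_right)
      qed
      then show ?thesis using g False by (simp only: PO_def V.poly_op_0 if_False V.scale_zero_left simp_thms)
    qed
  qed
  show ?thesis using key unfolding u_def by blast
qed

end
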